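(* Let $N\ge1$, $p\ge2$, $w,g\in L^1_{loc}(\mathbb{R}^N)$ positive a.e. Let $0<\delta\le\gamma$ and suppose $(\delta,p)$ belongs to the class $P_b$. Let $u\in C^1(\mathbb{R}^N)$, $u>0$, be a stable weak solution of $\operatorname{div}(w|\nabla u|^{p-2}\nabla u)=g(x)(u^{-\delta}+u^{-\gamma})$ in $\mathbb{R}^N$. Then for every $\beta\in(0,s_p)$ there is a constant $c>0$ (independent of $\psi$) such that for every nonnegative $\psi\in C^1_c(\mathbb{R}^N)$, $$\int_{\mathbb{R}^N} g\,(u^{-\delta}+u^{-\gamma})\,u^{-2\beta-p+1}\psi^p\,dx\le c\int_{\mathbb{R}^N} w\,u^{-2\beta}|\nabla\psi|^p\,dx.$$
   Context: Weak solution and stability are understood with $f(t)=-t^{-\delta}-t^{-\gamma}$, i.e. for the equation $-\operatorname{div}(w|\nabla u|^{p-2}\nabla u)=g f(u)$: $u\in C^1(\mathbb{R}^N)$ is a weak solution if $\int w|\nabla u|^{p-2}\nabla u\cdot\nabla\varphi\,dx=\int g f(u)\varphi\,dx$ for all $\varphi\in C^1_c(\mathbb{R}^N)$, and it is stable if for all $\varphi\in C^1_c(\mathbb{R}^N)$, $\int w|\nabla u|^{p-2}|\nabla\varphi|^2+(p-2)\int w|\nabla u|^{p-4}(\nabla u\cdot\nabla\varphi)^2-\int g f'(u)\varphi^2\ge0$ (the middle integrand is $0$ where $\nabla u=0$). The class $P_b$: $(\delta,p)\in P_b$ if either $p=2$ and $\delta>0$, or $p>2$ and $\delta>\frac{(p-1)^2}{4}$.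 The number $s_p$ is $s_p=\delta+\sqrt{\delta^2+\delta}$ if $p=2$ and $s_p=\frac{2\delta}{p-1}-\frac{p-1}{2}$ if $p>2$. *)

theory Defs
  imports "HOL-Analysis.Analysis"
begin

definition grad :: "('a::euclidean_space \<Rightarrow> real) \<Rightarrow> 'a \<Rightarrow> 'a" where
  "grad u x = (\<Sum>i\<in>Basis. frechet_derivative u (at x) i *\<^sub>R i)"

definition C1 :: "('a::euclidean_space \<Rightarrow> real) \<Rightarrow> bool" where
  "C1 u \<longleftrightarrow> (\<forall>x. u differentiable (at x)) \<and> continuous_on UNIV (grad u)"

definition C1c :: "('a::euclidean_space \<Rightarrow> real) \<Rightarrow> bool" where
  "C1c \<phi> \<longleftrightarrow> C1 \<phi> \<and> bounded {x. \<phi> x \<noteq> 0}"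

definition locally_integrable :: "('a::euclidean_space \<Rightarrow> real) \<Rightarrow> bool" where
  "locally_integrable f \<longleftrightarrow> (\<forall>K. compact K \<longrightarrow> set_integrable lborel K f)"

text \<open>Power of a nonnegative number with the convention r^0 = 1 (also for r = 0);
  for r = 0 and a \<noteq> 0 the value is 0 (the relevant integrands vanish there).\<close>
definition gpow :: "real \<Rightarrow> real \<Rightarrow> real" where
  "gpow r a = (if a = 0 then 1 else r powr a)"

definition fsing :: "real \<Rightarrow> real \<Rightarrow> real \<Rightarrow> real" where
  "fsing \<delta> \<gamma> t = - (t powr (-\<delta>)) - t powr (-\<gamma>)"

definition fsing' :: "real \<Rightarrow> real \<Rightarrow> real \<Rightarrow> real" where
  "fsing' \<delta> \<gamma> t = \<delta> * t powr (-\<delta>-1) + \<gamma> * t powr (-\<gamma>-1)"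

definition weak_solution ::
  "real \<Rightarrow> real \<Rightarrow> real \<Rightarrow> ('a::euclidean_space \<Rightarrow> real) \<Rightarrow> ('a \<Rightarrow> real) \<Rightarrow> ('a \<Rightarrow> real) \<Rightarrow> bool" where
  "weak_solution p \<delta> \<gamma> w g u \<longleftrightarrow>
     (\<forall>\<phi>. C1c \<phi> \<longrightarrow>
        (\<integral>x. w x * gpow (norm (grad u x)) (p-2) * (grad u x \<bullet> grad \<phi> x) \<partial>lborel)
        = (\<integral>x. g x * fsing \<delta> \<gamma> (u x) * \<phi> x \<partial>lborel))"

definition stable ::
  "real \<Rightarrow> real \<Rightarrow> real \<Rightarrow> ('a::euclidean_space \<Rightarrow> real) \<Rightarrow> ('a \<Rightarrow> real) \<Rightarrow> ('a \<Rightarrow> real) \<Rightarrow> bool" where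
  "stable p \<delta> \<gamma> w g u \<longleftrightarrow>
     (\<forall>\<phi>. C1c \<phi> \<longrightarrow>
        (\<integral>x. w x * gpow (norm (grad u x)) (p-2) * (norm (grad \<phi> x))\<^sup>2 \<partial>lborel)
        + (p-2) * (\<integral>x. (if grad u x = 0 then 0 else
              w x * norm (grad u x) powr (p-4) * (grad u x \<bullet> grad \<phi> x)\<^sup>2) \<partial>lborel)
        - (\<integral>x. g x * fsing' \<delta> \<gamma> (u x) * (\<phi> x)\<^sup>2 \<partial>lborel) \<ge> 0)"

definition P_b :: "real \<Rightarrow> real \<Rightarrow> bool" where
  "P_b \<delta> p \<longleftrightarrow> (p = 2 \<and> \<delta> > 0) \<or> (p > 2 \<and> \<delta> > (p-1)\<^sup>2 / 4)"

definition s_p :: "real \<Rightarrow> real \<Rightarrow> real" where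
  "s_p \<delta> p = (if p = 2 then \<delta> + sqrt (\<delta>\<^sup>2 + \<delta>) else 2*\<delta>/(p-1) - (p-1)/2)"

end

theory Submission
  imports Defs
begin

lemma grad_eq:
  fixes f :: "'a::euclidean_space \<Rightarrow> real"
  assumes "(f has_derivative (\<lambda>h. G \<bullet> h)) (at x)"
  shows "grad f x = G"
proof -
  have "frechet_derivative f (at x) = (\<lambda>h. G \<bullet> h)"
    using frechet_derivative_at[OF assms] by simp
  then show ?thesis unfolding grad_def by (simp add: euclidean_representation)
qed

lemma C1_deriv:
  fixes f :: "'a::euclidean_space \<Rightarrow> real"
  assumes "C1 f"
  shows "(f has_derivative (\<lambda>h. grad f x \<bullet> h)) (at x)"
proof -
  have d: "(f has_derivative frechet_derivative f (at x)) (at x)"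
    using assms unfolding C1_def using frechet_derivative_works by blast
  have lin: "linear (frechet_derivative f (at x))"
    using d has_derivative_linear by blast
  have "frechet_derivative f (at x) h = grad f x \<bullet> h" for h
  proof -
    have "frechet_derivative f (at x) h = frechet_derivative f (at x) h \<bullet> 1" by simp
    also have "\<dots> = (\<Sum>i\<in>Basis. (h\<bullet>i) * (frechet_derivative f (at x) i \<bullet> 1))"
      by (rule Linear_Algebra.linear_componentwise[OF lin])
    also have "\<dots> = grad f x \<bullet> h"
      unfolding grad_def by (simp add: inner_sum_right inner_commute, simp add: mult.commute)
    finally show ?thesis .
  qed
  then have "frechet_derivative f (at x) = (\<lambda>h. grad f x \<bullet> h)" by auto
  with d show ?thesis by simp
qed

lemma C1_cont: "C1 f \<Longrightarrow> continuous_on UNIV f"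
  unfolding C1_def by (meson continuous_at_imp_continuous_on differentiable_imp_continuous_within)

lemma C1_intro:
  fixes f :: "'a::euclidean_space \<Rightarrow> real"
  assumes "\<And>x. (f has_derivative (\<lambda>h. G x \<bullet> h)) (at x)" "continuous_on UNIV G"
  shows "C1 f" "grad f = G"
proof -
  show g: "grad f = G" using grad_eq[OF assms(1)] by auto
  show "C1 f" unfolding C1_def g using assms differentiableI by blast
qed

lemma grad_zero_min:
  fixes f :: "'a::euclidean_space \<Rightarrow> real"
  assumes "C1 f" "\<forall>y. f y \<ge> 0" "f x = 0"
  shows "grad f x = 0"
proof -
  have "(\<lambda>h. grad f x \<bullet> h) = (\<lambda>h. 0)"
    by (rule has_derivative_local_min[OF C1_deriv[OF assms(1)]]) (use assms in auto)
  then have "grad f x \<bullet> grad f x = 0" by metis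
  then show ?thesis by simp
qed

lemma C1_mult:
  fixes f g :: "'a::euclidean_space \<Rightarrow> real"
  assumes "C1 f" "C1 g"
  shows "C1 (\<lambda>x. f x * g x)" "grad (\<lambda>x. f x * g x) = (\<lambda>x. f x *\<^sub>R grad g x + g x *\<^sub>R grad f x)"
proof -
  have d: "((\<lambda>x. f x * g x) has_derivative (\<lambda>h. (f x *\<^sub>R grad g x + g x *\<^sub>R grad f x) \<bullet> h)) (at x)" for x
  proof -
    have "((\<lambda>x. f x * g x) has_derivative (\<lambda>h. f x * (grad g x \<bullet> h) + (grad f x \<bullet> h) * g x)) (at x)"
      by (rule has_derivative_mult[OF C1_deriv[OF assms(1)] C1_deriv[OF assms(2)]])
    moreover have "(\<lambda>h. f x * (grad g x \<bullet> h) + (grad f x \<bullet> h) * g x) = (\<lambda>h. (f x *\<^sub>R grad g x + g x *\<^sub>R grad f x) \<bullet> h)"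
      by (auto simp: inner_add_left algebra_simps)
    ultimately show ?thesis by simp
  qed
  have c: "continuous_on UNIV (\<lambda>x. f x *\<^sub>R grad g x + g x *\<^sub>R grad f x)"
    using assms C1_cont unfolding C1_def by (intro continuous_intros) auto
  show "C1 (\<lambda>x. f x * g x)" "grad (\<lambda>x. f x * g x) = (\<lambda>x. f x *\<^sub>R grad g x + g x *\<^sub>R grad f x)"
    using C1_intro[OF d c] by auto
qed

lemma C1_upowr:
  fixes u :: "'a::euclidean_space \<Rightarrow> real"
  assumes "C1 u" "\<forall>x. u x > 0"
  shows "C1 (\<lambda>x. u x powr e)" "grad (\<lambda>x. u x powr e) = (\<lambda>x. (e * u x powr (e-1)) *\<^sub>R grad u x)"
proof -
  have d: "((\<lambda>x. u x powr e) has_derivative (\<lambda>h. ((e * u x powr (e-1)) *\<^sub>R grad u x) \<bullet> h)) (at x)" for x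
  proof -
    have "((\<lambda>x. u x powr e) has_derivative (\<lambda>h. (grad u x \<bullet> h) * (e * u x powr (e-1)))) (at x)"
      by (rule DERIV_compose_FDERIV[OF has_real_derivative_powr C1_deriv[OF assms(1)]]) (use assms in auto)
    then show ?thesis by (simp add: mult.commute)
  qed
  have c: "continuous_on UNIV (\<lambda>x. (e * u x powr (e-1)) *\<^sub>R grad u x)"
    using assms C1_cont[OF assms(1)] assms(1) unfolding C1_def
    by (intro continuous_intros continuous_on_powr') (auto simp: less_imp_le dest: spec[of _ x for x] | metis less_irrefl)+
  show "C1 (\<lambda>x. u x powr e)" "grad (\<lambda>x. u x powr e) = (\<lambda>x. (e * u x powr (e-1)) *\<^sub>R grad u x)"
    using C1_intro[OF d c] by auto
qed

lemma spowr_deriv0: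
  fixes f :: "'a::euclidean_space \<Rightarrow> real"
  assumes "C1 f" "\<forall>y. f y \<ge> 0" "f x = 0" "r \<ge> 1"
  shows "((\<lambda>y. f y powr r) has_derivative (\<lambda>h. 0)) (at x)"
proof -
  have g0: "grad f x = 0" by (rule grad_zero_min[OF assms(1-3)])
  have "((\<lambda>y. norm ((f y - f x) - grad f x \<bullet> (y - x)) / norm (y - x)) \<longlongrightarrow> 0) (at x)"
    using C1_deriv[OF assms(1), of x] unfolding has_derivative_iff_norm by blast
  then have L: "((\<lambda>y. \<bar>f y\<bar> / norm (y - x)) \<longlongrightarrow> 0) (at x)" using g0 assms(3) by simp
  have "isCont f x" using C1_cont[OF assms(1)] by (simp add: continuous_on_eq_continuous_at)
  then have "(f \<longlongrightarrow> 0) (at x)" using assms(3) isCont_def by metis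
  then have "eventually (\<lambda>y. f y < 1) (at x)" by (rule order_tendstoD) simp
  then have ev: "eventually (\<lambda>y. norm (f y powr r - f x powr r - 0) / norm (y - x) \<le> \<bar>f y\<bar> / norm (y - x)) (at x)"
  proof eventually_elim
    case (elim y)
    have "f y powr r \<le> f y"
    proof (cases "f y = 0")
      case False
      then have "0 < f y" using assms(2) by (metis less_eq_real_def)
      then show ?thesis using powr_le_one_le[of "f y" r] elim assms(4) by simp
    qed simp
    then show ?case using assms(2,3) by (simp add: divide_right_mono)
  qed
  have "((\<lambda>y. norm (f y powr r - f x powr r - 0) / norm (y - x)) \<longlongrightarrow> 0) (at x)"
    by (rule tendsto_sandwich[OF _ ev tendsto_const L]) simp
  then show ?thesis unfolding has_derivative_iff_norm by simp
qed

lemma C1_spowr: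
  fixes f :: "'a::euclidean_space \<Rightarrow> real"
  assumes "C1 f" "\<forall>y. f y \<ge> 0" "r \<ge> 1"
  shows "C1 (\<lambda>x. f x powr r)" "grad (\<lambda>x. f x powr r) = (\<lambda>x. (r * f x powr (r-1)) *\<^sub>R grad f x)"
proof -
  have d: "((\<lambda>x. f x powr r) has_derivative (\<lambda>h. ((r * f x powr (r-1)) *\<^sub>R grad f x) \<bullet> h)) (at x)" for x
  proof (cases "f x = 0")
    case True
    then show ?thesis using spowr_deriv0[OF assms(1,2) True assms(3)] by simp
  next
    case False
    then have "f x > 0" using assms(2) by (metis less_eq_real_def)
    have "((\<lambda>x. f x powr r) has_derivative (\<lambda>h. (grad f x \<bullet> h) * (r * f x powr (r-1)))) (at x)"
      by (rule DERIV_compose_FDERIV[OF has_real_derivative_powr C1_deriv[OF assms(1)]]) (use \<open>f x > 0\<close> in auto)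
    then show ?thesis by (simp add: mult.commute)
  qed
  have c: "continuous_on UNIV (\<lambda>x. (r * f x powr (r-1)) *\<^sub>R grad f x)"
  proof (cases "r = 1")
    case True
    have "(\<lambda>x. (r * f x powr (r-1)) *\<^sub>R grad f x) = grad f"
    proof
      fix x show "(r * f x powr (r-1)) *\<^sub>R grad f x = grad f x"
        using True grad_zero_min[OF assms(1,2), of x] by (cases "f x = 0") auto
    qed
    then show ?thesis using assms(1) unfolding C1_def by metis
  next
    case False
    then have "r - 1 > 0" using assms(3) by simp
    then show ?thesis using assms C1_cont[OF assms(1)] unfolding C1_def
      by (intro continuous_intros continuous_on_powr') auto
  qed
  show "C1 (\<lambda>x. f x powr r)" "grad (\<lambda>x. f x powr r) = (\<lambda>x. (r * f x powr (r-1)) *\<^sub>R grad f x)"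
    using C1_intro[OF d c] by auto
qed

lemma li_integrable:
  fixes w h :: "'a::euclidean_space \<Rightarrow> real"
  assumes "locally_integrable w" "compact K" "h \<in> borel_measurable lborel"
    "\<forall>x. x \<notin> K \<longrightarrow> h x = 0" "\<forall>x\<in>K. \<bar>h x\<bar> \<le> B"
  shows "integrable lborel (\<lambda>x. w x * h x)"
proof -
  have "set_integrable lborel K w" using assms(1,2) unfolding locally_integrable_def by blast
  then have i: "integrable lborel (\<lambda>x. indicator K x * w x)" unfolding set_integrable_def by simp
  have e: "(\<lambda>x. w x * h x) = (\<lambda>x. (indicator K x * w x) * h x)"
    using assms(4) by (intro ext) (auto simp: indicator_def)
  have "integrable lborel (\<lambda>x. B * \<bar>indicator K x * w x\<bar>)" using i by auto
  moreover have "(\<lambda>x. (indicator K x * w x) * h x) \<in> borel_measurable lborel"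
    using i assms(3) by measurable
  moreover have "AE x in lborel. norm ((indicator K x * w x) * h x) \<le> norm (B * \<bar>indicator K x * w x\<bar>)"
  proof (rule AE_I2)
    fix x show "norm ((indicator K x * w x) * h x) \<le> norm (B * \<bar>indicator K x * w x\<bar>)"
    proof (cases "x \<in> K")
      case True
      then have "\<bar>h x\<bar> \<le> B" using assms(5) by auto
      then show ?thesis using True by (simp add: abs_mult mult_right_mono mult.commute)
    qed simp
  qed
  ultimately have "integrable lborel (\<lambda>x. (indicator K x * w x) * h x)"
    by (rule Bochner_Integration.integrable_bound[where f="\<lambda>x. B * \<bar>indicator K x * w x\<bar>" and g="\<lambda>x. (indicator K x * w x) * h x"])
  then show ?thesis unfolding e .
qed

definition bdd_on :: "'a set \<Rightarrow> ('a \<Rightarrow> real) \<Rightarrow> bool" where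
  "bdd_on K f \<longleftrightarrow> (\<exists>B. \<forall>x\<in>K. \<bar>f x\<bar> \<le> B)"

lemma bdd_on_cont: "compact K \<Longrightarrow> continuous_on K f \<Longrightarrow> bdd_on K f"
proof -
  assume "compact K" "continuous_on K f"
  then have "bounded (f ` K)" using compact_continuous_image compact_imp_bounded by blast
  then obtain B where "\<forall>y\<in>f ` K. \<bar>y\<bar> \<le> B" unfolding bounded_real by blast
  then show ?thesis unfolding bdd_on_def by auto
qed

lemma bdd_on_mult: "bdd_on K f \<Longrightarrow> bdd_on K g \<Longrightarrow> bdd_on K (\<lambda>x. f x * g x)"
  unfolding bdd_on_def
proof (elim exE)
  fix B1 B2 assume b1: "\<forall>x\<in>K. \<bar>f x\<bar> \<le> B1" and b2: "\<forall>x\<in>K. \<bar>g x\<bar> \<le> B2"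
  have "\<forall>x\<in>K. \<bar>f x * g x\<bar> \<le> max B1 0 * max B2 0"
  proof
    fix x assume x: "x \<in> K"
    have "\<bar>f x\<bar> \<le> max B1 0" "\<bar>g x\<bar> \<le> max B2 0" using b1 b2 x by auto
    then have "\<bar>f x\<bar> * \<bar>g x\<bar> \<le> max B1 0 * max B2 0" by (rule mult_mono) auto
    then show "\<bar>f x * g x\<bar> \<le> max B1 0 * max B2 0" by (simp add: abs_mult)
  qed
  then show "\<exists>B. \<forall>x\<in>K. \<bar>f x * g x\<bar> \<le> B" by blast
qed

lemma bdd_on_add: "bdd_on K f \<Longrightarrow> bdd_on K g \<Longrightarrow> bdd_on K (\<lambda>x. f x + g x)"
  unfolding bdd_on_def
proof (elim exE)
  fix B1 B2 assume b1: "\<forall>x\<in>K. \<bar>f x\<bar> \<le> B1" and b2: "\<forall>x\<in>K. \<bar>g x\<bar> \<le> B2"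
  have "\<forall>x\<in>K. \<bar>f x + g x\<bar> \<le> B1 + B2"
  proof
    fix x assume "x \<in> K"
    then have "\<bar>f x\<bar> \<le> B1" "\<bar>g x\<bar> \<le> B2" using b1 b2 by auto
    then show "\<bar>f x + g x\<bar> \<le> B1 + B2" by linarith
  qed
  then show "\<exists>B. \<forall>x\<in>K. \<bar>f x + g x\<bar> \<le> B" by blast
qed

lemma bdd_on_const: "bdd_on K (\<lambda>x. c)"
  unfolding bdd_on_def by blast

lemma bdd_on_powr:
  assumes "bdd_on K f" "\<forall>x. f x \<ge> 0" "r \<ge> 0"
  shows "bdd_on K (\<lambda>x. f x powr r)"
proof -
  obtain B where b: "\<forall>x\<in>K. \<bar>f x\<bar> \<le> B" using assms(1) unfolding bdd_on_def by blast
  have "\<forall>x\<in>K. \<bar>f x powr r\<bar> \<le> B powr r"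
  proof
    fix x assume "x \<in> K"
    then have "f x \<le> B" using b by auto
    then show "\<bar>f x powr r\<bar> \<le> B powr r" using powr_mono2[of r "f x" B] assms(2,3) by simp
  qed
  then show ?thesis unfolding bdd_on_def by blast
qed

lemma li_integrable':
  fixes w h :: "'a::euclidean_space \<Rightarrow> real"
  assumes "locally_integrable w" "compact K" "h \<in> borel_measurable lborel"
    "\<forall>x. x \<notin> K \<longrightarrow> h x = 0" "bdd_on K h"
  shows "integrable lborel (\<lambda>x. w x * h x)"
proof -
  obtain B where "\<forall>x\<in>K. \<bar>h x\<bar> \<le> B" using assms(5) unfolding bdd_on_def by blast
  then show ?thesis using li_integrable[OF assms(1-4)] by blast
qed

lemma amgm: "e > 0 \<Longrightarrow> (X::real) * Y \<le> e * X\<^sup>2 + (1/(4*e)) * Y\<^sup>2"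
proof -
  assume e: "e > 0"
  have "e * X\<^sup>2 + (1/(4*e)) * Y\<^sup>2 - X * Y = (2*e*X - Y)\<^sup>2 / (4*e)"
    using e by (simp add: power2_eq_square field_simps)
  moreover have "(2*e*X - Y)\<^sup>2 / (4*e) \<ge> 0" using e by simp
  ultimately show ?thesis by linarith
qed

lemma J_bound:
  fixes u s a G Dv e \<alpha> p :: real
  assumes "u > 0" "s \<ge> 0" "a \<ge> 0" "G \<ge> 0" "\<bar>Dv\<bar> \<le> a * G" "e > 0"
  shows "\<bar>u powr (-2*\<alpha>-1) * s powr (p-1) * Dv\<bar>
     \<le> e * (u powr (-2*\<alpha>-2) * s powr p * a\<^sup>2) + (1/(4*e)) * (u powr (-2*\<alpha>) * s powr (p-2) * G\<^sup>2)"
proof -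
  define X where "X = u powr (-\<alpha>-1) * s powr (p/2) * a"
  define Y where "Y = u powr (-\<alpha>) * s powr (p/2-1) * G"
  have u1: "u powr (-\<alpha>-1) * u powr (-\<alpha>) = u powr (-2*\<alpha>-1)"
    by (simp add: powr_add[symmetric] algebra_simps)
  have u2: "u powr (-\<alpha>-1) * u powr (-\<alpha>-1) = u powr (-2*\<alpha>-2)"
    by (simp add: powr_add[symmetric] algebra_simps)
  have u3: "u powr (-\<alpha>) * u powr (-\<alpha>) = u powr (-2*\<alpha>)"
    by (simp add: powr_add[symmetric] algebra_simps)
  have s1: "s powr (p/2) * s powr (p/2-1) = s powr (p-1)"
    by (simp add: powr_add[symmetric] algebra_simps)
  have s2: "s powr (p/2) * s powr (p/2) = s powr p"
    by (simp add: powr_add[symmetric] algebra_simps)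
  have s3: "s powr (p/2-1) * s powr (p/2-1) = s powr (p-2)"
    by (simp add: powr_add[symmetric] algebra_simps)
  have XY: "X * Y = u powr (-2*\<alpha>-1) * s powr (p-1) * (a * G)"
    unfolding X_def Y_def using u1 s1 by (simp add: algebra_simps)
  have X2: "X\<^sup>2 = u powr (-2*\<alpha>-2) * s powr p * a\<^sup>2"
    unfolding X_def power2_eq_square using u2 s2 by (simp add: algebra_simps)
  have Y2: "Y\<^sup>2 = u powr (-2*\<alpha>) * s powr (p-2) * G\<^sup>2"
    unfolding Y_def power2_eq_square using u3 s3 by (simp add: algebra_simps)
  have "\<bar>u powr (-2*\<alpha>-1) * s powr (p-1) * Dv\<bar> = u powr (-2*\<alpha>-1) * s powr (p-1) * \<bar>Dv\<bar>"
    by (simp add: abs_mult)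
  also have "\<dots> \<le> u powr (-2*\<alpha>-1) * s powr (p-1) * (a * G)"
    using assms(5) by (intro mult_left_mono) auto
  also have "\<dots> = X * Y" using XY by simp
  also have "\<dots> \<le> e * X\<^sup>2 + (1/(4*e)) * Y\<^sup>2" by (rule amgm[OF assms(6)])
  finally show ?thesis unfolding X2 Y2 .
qed

lemma young_eps:
  fixes p e :: real
  assumes "p > 2" "e > 0"
  shows "\<exists>C>0. \<forall>X Y. X \<ge> 0 \<longrightarrow> Y \<ge> 0 \<longrightarrow> X powr (p-2) * Y powr 2 \<le> e * X powr p + C * Y powr p"
proof -
  define l where "l = e powr (1/p)"
  have l: "l > 0" using assms unfolding l_def by simp
  have lp: "l powr p = e" using assms unfolding l_def by (simp add: powr_powr)
  define C where "C = (2/p) * l powr (-(p-2)*(p/2))"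
  have C: "C > 0" using assms l unfolding C_def by simp
  have "X powr (p-2) * Y powr 2 \<le> e * X powr p + C * Y powr p" if XY: "X \<ge> 0" "Y \<ge> 0" for X Y
  proof -
    define A where "A = (l*X) powr (p-2)"
    define B where "B = l powr (-(p-2)) * Y powr 2"
    have P1: "p/(p-2) > 1" "p/2 > 1" "1/(p/(p-2)) + 1/(p/2) = 1" using assms by (auto simp: field_simps)
    have A0: "A \<ge> 0" "B \<ge> 0" unfolding A_def B_def by auto
    have "A * B \<le> A powr (p/(p-2)) / (p/(p-2)) + B powr (p/2) / (p/2)"
      by (rule Youngs_inequality[OF P1 A0])
    moreover have "A * B = X powr (p-2) * Y powr 2"
    proof -
      have "l powr (p-2) * l powr (-(p-2)) = 1" using l by (simp add: powr_add[symmetric])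
      then show ?thesis unfolding A_def B_def powr_mult by (simp add: algebra_simps)
    qed
    moreover have "A powr (p/(p-2)) = e * X powr p"
    proof -
      have "A powr (p/(p-2)) = (l*X) powr p" unfolding A_def powr_powr using assms by simp
      then show ?thesis unfolding powr_mult lp by simp
    qed
    moreover have "B powr (p/2) = l powr (-(p-2)*(p/2)) * Y powr p"
      unfolding B_def powr_mult powr_powr by simp
    moreover have "e * X powr p / (p/(p-2)) \<le> e * X powr p"
    proof -
      have "e * X powr p \<ge> 0" using assms by simp
      moreover have "p/(p-2) \<ge> 1" using P1 by simp
      ultimately have "e * X powr p / (p/(p-2)) \<le> e * X powr p / 1"
        by (intro divide_left_mono) auto
      then show ?thesis by simp
    qed
    ultimately show ?thesis unfolding C_def by (simp add: field_simps)
  qed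
  then show ?thesis using C by blast
qed

lemma alg_core:
  fixes p \<alpha> \<delta> :: real
  assumes p: "p \<ge> 2" and a: "\<alpha> > 0" and d: "\<delta> > 0"
    and Q: "(2*\<alpha>+1)*((p-1)*\<alpha>-\<delta>) < (p-1)*(\<alpha>\<^sup>2+\<alpha>)"
  shows "\<exists>e1>0. \<exists>M>0. \<forall>I J K F. I \<ge> 0 \<longrightarrow> K \<ge> 0 \<longrightarrow> F \<ge> 0 \<longrightarrow>
     F = (2*\<alpha>+1)*I - p*J \<longrightarrow>
     \<delta>*F \<le> (p-1)*(\<alpha>\<^sup>2*I - \<alpha>*p*J + (p\<^sup>2/4)*K) \<longrightarrow>
     -(p*J) \<le> p*(e1*I + (1/(4*e1))*K) \<longrightarrow> F \<le> M*K \<and> I \<le> M*K"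
proof -
  define t where "t = (p-1)*\<alpha>-\<delta>"
  define tp where "tp = max t 0"
  define m where "m = (p-1)*(\<alpha>\<^sup>2+\<alpha>)"
  define P where "P = (p-1)*p\<^sup>2/4"
  have m: "m > 0" unfolding m_def using p a by (simp add: add_pos_pos)
  have tp0: "tp \<ge> 0" unfolding tp_def by simp
  have Qp: "(2*\<alpha>+1)*tp < m"
  proof (cases "t \<ge> 0")
    case True then show ?thesis using Q unfolding tp_def m_def t_def by simp
  next
    case False then show ?thesis using m unfolding tp_def by simp
  qed
  define e1 where "e1 = (m - (2*\<alpha>+1)*tp)/(2*p*(tp+1))"
  have e1: "e1 > 0" unfolding e1_def using Qp p tp0 by (intro divide_pos_pos mult_pos_pos) auto
  define A where "A = 2*\<alpha>+1+p*e1"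
  define B where "B = p/(4*e1)"
  have B: "B > 0" unfolding B_def using e1 p by simp
  have A: "A > 0" unfolding A_def using e1 p a by (simp add: add_pos_pos)
  have pe1: "p*e1*tp \<le> (m - (2*\<alpha>+1)*tp)/2"
  proof -
    have "p*e1*tp = (m - (2*\<alpha>+1)*tp) * (tp/(2*(tp+1)))"
    proof -
      have "p \<noteq> 0" "tp + 1 \<noteq> 0" using p tp0 by auto
      then have "p * e1 = (m - (2*\<alpha>+1)*tp) / (2*(tp+1))" unfolding e1_def by simp
      then show ?thesis by (simp add: divide_simps mult.assoc split: if_splits)
    qed
    also have "\<dots> \<le> (m - (2*\<alpha>+1)*tp) * (1/2)"
      using Qp tp0 by (intro mult_left_mono) (auto simp: field_simps)
    finally show ?thesis by simp
  qed
  have Atp: "A*tp < m" unfolding A_def using pe1 Qp by (simp add: algebra_simps)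
  define M1 where "M1 = (A*P + B*m)/(m - A*tp)"
  have P0: "P \<ge> 0" unfolding P_def using p by simp
  have M1: "M1 \<ge> 0" unfolding M1_def using Atp A B P0 m by (intro divide_nonneg_pos) auto
  define M where "M = M1 + (P + tp*M1)/m + 1"
  have M: "M > 0" unfolding M_def using M1 P0 tp0 m
    by (smt (verit) divide_nonneg_pos mult_nonneg_nonneg)
  have "F \<le> M*K \<and> I \<le> M*K"
    if I: "I \<ge> 0" and K: "K \<ge> 0" and F: "F \<ge> 0" and W: "F = (2*\<alpha>+1)*I - p*J"
    and S: "\<delta>*F \<le> (p-1)*(\<alpha>\<^sup>2*I - \<alpha>*p*J + (p\<^sup>2/4)*K)"
    and Jb: "-(p*J) \<le> p*(e1*I + (1/(4*e1))*K)" for I J K F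
  proof -
    have pJ: "p*J = (2*\<alpha>+1)*I - F" using W by simp
    have "\<alpha>*p*J = \<alpha>*((2*\<alpha>+1)*I - F)" using pJ by (simp add: mult.assoc)
    then have "\<delta>*F \<le> (p-1)*(\<alpha>\<^sup>2*I - \<alpha>*((2*\<alpha>+1)*I - F) + (p\<^sup>2/4)*K)" using S by metis
    then have h1: "m*I \<le> P*K + t*F" unfolding m_def P_def t_def by (simp add: algebra_simps power2_eq_square)
    have "t*F \<le> tp*F" unfolding tp_def using F by (intro mult_right_mono) auto
    with h1 have h2: "m*I \<le> P*K + tp*F" by simp
    have h3: "F \<le> A*I + B*K" using W Jb unfolding A_def B_def by (simp add: algebra_simps)
    have "m*F \<le> m*(A*I + B*K)" using h3 m by (intro mult_left_mono) auto
    also have "\<dots> = A*(m*I) + B*m*K" by (simp add: algebra_simps)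
    finally have "m*F \<le> A*(m*I) + B*m*K" .
    also have "\<dots> \<le> A*(P*K + tp*F) + B*m*K" using h2 A by (intro add_right_mono mult_left_mono) auto
    finally have "(m - A*tp)*F \<le> (A*P + B*m)*K" by (simp add: algebra_simps)
    then have FM1: "F \<le> M1*K" unfolding M1_def using Atp by (simp add: field_simps)
    have "m*I \<le> P*K + tp*(M1*K)" using h2 FM1 tp0 by (smt (verit) mult_left_mono)
    then have IM: "I \<le> ((P + tp*M1)/m)*K" using m by (simp add: field_simps)
    have R: "(P + tp*M1)/m \<ge> 0" using M1 P0 tp0 m by simp
    have "M1 \<le> M" "(P + tp*M1)/m \<le> M" unfolding M_def using R M1 by linarith+
    then have "M1*K \<le> M*K" "((P + tp*M1)/m)*K \<le> M*K" using K mult_right_mono by blast+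
    then show ?thesis using FM1 IM by linarith
  qed
  then show ?thesis using e1 M by blast
qed

lemma Q_holds:
  fixes p \<delta> \<beta> :: real
  assumes p: "p \<ge> 2" and d: "\<delta> > 0" and b: "0 < \<beta>"
    and bs: "\<beta> < (if p = 2 then \<delta> + sqrt (\<delta>\<^sup>2 + \<delta>) else 2*\<delta>/(p-1) - (p-1)/2)"
  shows "\<beta> + (p-2)/2 > 0"
    "(2*(\<beta> + (p-2)/2)+1)*((p-1)*(\<beta> + (p-2)/2)-\<delta>) < (p-1)*((\<beta> + (p-2)/2)\<^sup>2+(\<beta> + (p-2)/2))"
proof -
  define \<alpha> where "\<alpha> = \<beta> + (p-2)/2"
  show "\<beta> + (p-2)/2 > 0" using p b by (simp add: add_pos_nonneg)
  then have a: "\<alpha> > 0" unfolding \<alpha>_def .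
  have key: "(p-1)*\<alpha>\<^sup>2 - 2*\<delta>*\<alpha> - \<delta> < 0"
  proof (cases "p = 2")
    case True
    then have ab: "\<alpha> = \<beta>" unfolding \<alpha>_def by simp
    have lt: "\<beta> < \<delta> + sqrt (\<delta>\<^sup>2 + \<delta>)" using bs True by simp
    have "\<delta> < sqrt (\<delta>\<^sup>2 + \<delta>)"
      using d by (intro real_less_rsqrt) simp
    then have "\<bar>\<beta> - \<delta>\<bar> < sqrt (\<delta>\<^sup>2 + \<delta>)" using lt b by linarith
    then have "\<bar>\<beta> - \<delta>\<bar>\<^sup>2 < (sqrt (\<delta>\<^sup>2 + \<delta>))\<^sup>2"
      by (intro power_strict_mono) auto
    then have "(\<beta> - \<delta>)\<^sup>2 < (sqrt (\<delta>\<^sup>2 + \<delta>))\<^sup>2" by simp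
    also have "\<dots> = \<delta>\<^sup>2 + \<delta>" using d by simp
    finally show ?thesis using True ab by (simp add: power2_eq_square algebra_simps)
  next
    case False
    then have p2: "p > 2" using p by simp
    have "\<beta> < 2*\<delta>/(p-1) - (p-1)/2" using bs False by simp
    moreover have "(p-2)/2 = (p-1)/2 - 1/2" by (simp add: field_simps)
    ultimately have "\<alpha> < 2*\<delta>/(p-1) - 1/2" unfolding \<alpha>_def by linarith
    then have "(p-1)*\<alpha> < (p-1)*(2*\<delta>/(p-1) - 1/2)" using p2 by simp
    also have "\<dots> = 2*\<delta> - (p-1)/2" using p2 by (simp add: field_simps)
    finally have "(p-1)*\<alpha> < 2*\<delta> - (p-1)/2" .
    moreover have "(p-1)/2 > 0" using p2 by simp
    ultimately have "(p-1)*\<alpha> - 2*\<delta> < 0" by linarith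
    then have "\<alpha> * ((p-1)*\<alpha> - 2*\<delta>) < 0" using a by (simp add: mult_pos_neg)
    then show ?thesis using d by (simp add: power2_eq_square algebra_simps)
  qed
  show "(2*(\<beta> + (p-2)/2)+1)*((p-1)*(\<beta> + (p-2)/2)-\<delta>) < (p-1)*((\<beta> + (p-2)/2)\<^sup>2+(\<beta> + (p-2)/2))"
    using key unfolding \<alpha>_def[symmetric] by (simp add: power2_eq_square algebra_simps)
qed

lemma young_pt:
  fixes p \<beta> e :: real
  assumes p: "p \<ge> 2" and e: "e > 0"
  shows "\<exists>C>0. \<forall>a U s G. a \<ge> 0 \<longrightarrow> U > 0 \<longrightarrow> s \<ge> 0 \<longrightarrow> G \<ge> 0 \<longrightarrow>
    gpow a (p-2) * U powr (-2*(\<beta> + (p-2)/2)) * s powr (p-2) * G\<^sup>2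
    \<le> e * (gpow a (p-2) * U powr (-2*(\<beta> + (p-2)/2)-2) * s powr p * a\<^sup>2) + C * (U powr (-2*\<beta>) * G powr p)"
proof (cases "p = 2")
  case True
  have "gpow a (p-2) * U powr (-2*(\<beta> + (p-2)/2)) * s powr (p-2) * G\<^sup>2
    \<le> e * (gpow a (p-2) * U powr (-2*(\<beta> + (p-2)/2)-2) * s powr p * a\<^sup>2) + 1 * (U powr (-2*\<beta>) * G powr p)"
    if "a \<ge> 0" "U > 0" "s \<ge> 0" "G \<ge> 0" for a U s G
  proof -
    have "U powr (-2*\<beta>) * (s powr 0) * G\<^sup>2 \<le> U powr (-2*\<beta>) * 1 * G\<^sup>2"
      by (intro mult_left_mono mult_right_mono) auto
    moreover have "0 \<le> e * (U powr (-2*\<beta>-2) * s powr 2 * a\<^sup>2)" using e by simp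
    ultimately show ?thesis using True that unfolding gpow_def by simp
  qed
  then show ?thesis by (intro exI[of _ 1]) auto
next
  case False
  then have p2: "p > 2" using p by simp
  obtain C where C: "C > 0" and Y: "\<forall>X Y. X \<ge> 0 \<longrightarrow> Y \<ge> 0 \<longrightarrow> X powr (p-2) * Y powr 2 \<le> e * X powr p + C * Y powr p"
    using young_eps[OF p2 e] by blast
  define \<alpha> where "\<alpha> = \<beta> + (p-2)/2"
  define c where "c = -\<alpha> + (\<alpha>+1)*(p-2)/p"
  have "gpow a (p-2) * U powr (-2*\<alpha>) * s powr (p-2) * G\<^sup>2
    \<le> e * (gpow a (p-2) * U powr (-2*\<alpha>-2) * s powr p * a\<^sup>2) + C * (U powr (-2*\<beta>) * G powr p)"
    if h: "a \<ge> 0" "U > 0" "s \<ge> 0" "G \<ge> 0" for a U s G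
  proof -
    define X where "X = a * s * U powr (-(2*\<alpha>+2)/p)"
    define Z where "Z = G * U powr c"
    have X0: "X \<ge> 0" "Z \<ge> 0" unfolding X_def Z_def using h by auto
    have ga: "gpow a (p-2) = a powr (p-2)" unfolding gpow_def using p2 by simp
    have "X powr (p-2) * Z powr 2 = a powr (p-2) * s powr (p-2) * G\<^sup>2 * (U powr (-(2*\<alpha>+2)/p*(p-2)) * U powr (c*2))"
      unfolding X_def Z_def powr_mult powr_powr using h by (simp add: algebra_simps)
    also have "U powr (-(2*\<alpha>+2)/p*(p-2)) * U powr (c*2) = U powr (-2*\<alpha>)"
    proof -
      have "-(2*\<alpha>+2)/p*(p-2) + c*2 = -2*\<alpha>" unfolding c_def using p2 by (simp add: field_simps)
      then show ?thesis by (metis powr_add)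
    qed
    finally have L: "X powr (p-2) * Z powr 2 = gpow a (p-2) * U powr (-2*\<alpha>) * s powr (p-2) * G\<^sup>2"
      unfolding ga by (simp add: algebra_simps)
    have "X powr p = a powr p * s powr p * U powr (-(2*\<alpha>+2)/p*p)"
      unfolding X_def powr_mult powr_powr by simp
    also have "-(2*\<alpha>+2)/p*p = -2*\<alpha>-2" using p2 by simp
    also have "a powr p = a powr (p-2) * a\<^sup>2"
    proof -
      have "a powr p = a powr ((p-2) + 2)" by simp
      also have "\<dots> = a powr (p-2) * a powr 2" by (rule powr_add)
      finally show ?thesis using h by simp
    qed
    finally have R1: "X powr p = gpow a (p-2) * U powr (-2*\<alpha>-2) * s powr p * a\<^sup>2"
      unfolding ga by (simp add: algebra_simps)
    have "Z powr p = G powr p * U powr (c*p)" unfolding Z_def powr_mult powr_powr by simp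
    also have "c*p = -2*\<beta>" unfolding c_def \<alpha>_def using p2 by (simp add: field_simps)
    finally have R2: "Z powr p = U powr (-2*\<beta>) * G powr p" by simp
    show ?thesis using Y X0 L R1 R2 by metis
  qed
  then show ?thesis using C unfolding \<alpha>_def by blast
qed

lemma phi2_inner:
  fixes gu gp :: "'a::euclidean_space" and U s p \<alpha> :: real
  shows "gu \<bullet> (U powr (-2*\<alpha>-1) *\<^sub>R ((p * s powr (p-1)) *\<^sub>R gp) + s powr p *\<^sub>R (((-2*\<alpha>-1) * U powr (-2*\<alpha>-1-1)) *\<^sub>R gu))
    = p * (U powr (-2*\<alpha>-1) * s powr (p-1) * (gu \<bullet> gp)) + (-2*\<alpha>-1) * (U powr (-2*\<alpha>-2) * s powr p * (norm gu)\<^sup>2)"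
proof -
  have e: "-2*\<alpha>-1-1 = -2*\<alpha>-2" by simp
  show ?thesis unfolding e by (simp add: inner_add_right power2_norm_eq_inner algebra_simps)
qed

lemma phi_expand:
  fixes gu gp :: "'a::euclidean_space" and U s p \<alpha> :: real
  shows "(norm (U powr (-\<alpha>) *\<^sub>R ((p/2 * s powr (p/2-1)) *\<^sub>R gp) + s powr (p/2) *\<^sub>R ((-\<alpha> * U powr (-\<alpha>-1)) *\<^sub>R gu)))\<^sup>2
    = \<alpha>\<^sup>2 * (U powr (-2*\<alpha>-2) * s powr p * (norm gu)\<^sup>2) - \<alpha>*p*(U powr (-2*\<alpha>-1) * s powr (p-1) * (gu \<bullet> gp))
      + (p\<^sup>2/4) * (U powr (-2*\<alpha>) * s powr (p-2) * (norm gp)\<^sup>2)"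
proof -
  define c1 where "c1 = U powr (-\<alpha>) * (p/2 * s powr (p/2-1))"
  define c2 where "c2 = s powr (p/2) * (-\<alpha> * U powr (-\<alpha>-1))"
  have v: "U powr (-\<alpha>) *\<^sub>R ((p/2 * s powr (p/2-1)) *\<^sub>R gp) + s powr (p/2) *\<^sub>R ((-\<alpha> * U powr (-\<alpha>-1)) *\<^sub>R gu)
     = c1 *\<^sub>R gp + c2 *\<^sub>R gu" unfolding c1_def c2_def by simp
  have n: "(norm (c1 *\<^sub>R gp + c2 *\<^sub>R gu))\<^sup>2 = c1*c1 * (norm gp)\<^sup>2 + 2*(c1*c2) * (gu \<bullet> gp) + c2*c2 * (norm gu)\<^sup>2"
    by (simp add: power2_norm_eq_inner inner_add_left inner_add_right inner_commute algebra_simps)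
  have uu1: "U powr (-\<alpha>) * U powr (-\<alpha>) = U powr (-2*\<alpha>)" by (simp add: powr_add[symmetric] algebra_simps)
  have uu2: "U powr (-\<alpha>-1) * U powr (-\<alpha>-1) = U powr (-2*\<alpha>-2)" by (simp add: powr_add[symmetric] algebra_simps)
  have uu3: "U powr (-\<alpha>) * U powr (-\<alpha>-1) = U powr (-2*\<alpha>-1)" by (simp add: powr_add[symmetric] algebra_simps)
  have ss1: "s powr (p/2-1) * s powr (p/2-1) = s powr (p-2)" by (simp add: powr_add[symmetric] algebra_simps)
  have ss2: "s powr (p/2) * s powr (p/2) = s powr p" by (simp add: powr_add[symmetric] algebra_simps)
  have ss3: "s powr (p/2-1) * s powr (p/2) = s powr (p-1)" by (simp add: powr_add[symmetric] algebra_simps)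
  have a1: "c1*c1 = (p\<^sup>2/4) * U powr (-2*\<alpha>) * s powr (p-2)"
    unfolding c1_def power2_eq_square using uu1 ss1 by (simp add: algebra_simps)
  have a2: "c2*c2 = \<alpha>\<^sup>2 * U powr (-2*\<alpha>-2) * s powr p"
    unfolding c2_def power2_eq_square using uu2 ss2 by (simp add: algebra_simps)
  have a3: "2*(c1*c2) = -\<alpha>*p * U powr (-2*\<alpha>-1) * s powr (p-1)"
    unfolding c1_def c2_def using uu3 ss3
    by (simp add: algebra_simps)
  show ?thesis unfolding v n a1 a2 a3 by (simp add: algebra_simps)
qed

lemma fprime_bound:
  fixes U s \<delta> \<gamma> \<alpha> :: real
  assumes "U > 0" "\<delta> \<le> \<gamma>" "s \<ge> 0" "0 < \<delta>"
  shows "\<delta> * ((U powr (-\<delta>) + U powr (-\<gamma>)) * U powr (-2*\<alpha>-1) * s powr p)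
    \<le> (\<delta> * U powr (-\<delta>-1) + \<gamma> * U powr (-\<gamma>-1)) * (U powr (-\<alpha>) * s powr (p/2))\<^sup>2"
proof -
  have e1: "U powr (-\<delta>) * U powr (-2*\<alpha>-1) = U powr (-\<delta>-1) * (U powr (-\<alpha>) * U powr (-\<alpha>))"
    by (simp add: powr_add[symmetric] algebra_simps)
  have e2: "U powr (-\<gamma>) * U powr (-2*\<alpha>-1) = U powr (-\<gamma>-1) * (U powr (-\<alpha>) * U powr (-\<alpha>))"
    by (simp add: powr_add[symmetric] algebra_simps)
  have ss2: "s powr (p/2) * s powr (p/2) = s powr p" by (simp add: powr_add[symmetric] algebra_simps)
  have m: "\<delta> * (U powr (-\<gamma>-1) * (U powr (-\<alpha>) * U powr (-\<alpha>)) * s powr p)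
      \<le> \<gamma> * (U powr (-\<gamma>-1) * (U powr (-\<alpha>) * U powr (-\<alpha>)) * s powr p)"
    using assms by (intro mult_right_mono) auto
  have "\<delta> * ((U powr (-\<delta>) + U powr (-\<gamma>)) * U powr (-2*\<alpha>-1) * s powr p)
     = \<delta> * (U powr (-\<delta>-1) * (U powr (-\<alpha>) * U powr (-\<alpha>)) * s powr p)
       + \<delta> * (U powr (-\<gamma>-1) * (U powr (-\<alpha>) * U powr (-\<alpha>)) * s powr p)"
    using e1 e2 by (simp add: algebra_simps)
  also have "\<dots> \<le> \<delta> * (U powr (-\<delta>-1) * (U powr (-\<alpha>) * U powr (-\<alpha>)) * s powr p)
       + \<gamma> * (U powr (-\<gamma>-1) * (U powr (-\<alpha>) * U powr (-\<alpha>)) * s powr p)" using m by simp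
  also have "\<dots> = (\<delta> * U powr (-\<delta>-1) + \<gamma> * U powr (-\<gamma>-1)) * (U powr (-\<alpha>) * s powr (p/2))\<^sup>2"
    unfolding power2_eq_square using ss2 by (simp add: algebra_simps)
  finally show ?thesis .
qed

lemma mid_bound:
  fixes gu v :: "'a::euclidean_space" and W p :: real
  assumes "W \<ge> 0" "p > 2"
  shows "(if gu = 0 then 0 else W * norm gu powr (p-4) * (gu \<bullet> v)\<^sup>2) \<le> W * gpow (norm gu) (p-2) * (norm v)\<^sup>2"
proof (cases "gu = 0")
  case True then show ?thesis using assms unfolding gpow_def by auto
next
  case False
  then have n: "norm gu > 0" by simp
  have cs: "(gu \<bullet> v)\<^sup>2 \<le> (norm gu)\<^sup>2 * (norm v)\<^sup>2"
  proof -
    have "\<bar>gu \<bullet> v\<bar> \<le> norm gu * norm v" by (rule Cauchy_Schwarz_ineq2)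
    then have "\<bar>gu \<bullet> v\<bar>\<^sup>2 \<le> (norm gu * norm v)\<^sup>2" by (intro power_mono) auto
    then show ?thesis by (simp add: power_mult_distrib)
  qed
  have pw: "norm gu powr (p-4) * (norm gu)\<^sup>2 = norm gu powr (p-2)"
  proof -
    have "norm gu powr (p-4) * (norm gu)\<^sup>2 = norm gu powr (p-4) * norm gu powr 2" by simp
    also have "\<dots> = norm gu powr (p-4+2)" by (rule powr_add[symmetric])
    also have "\<dots> = norm gu powr (p-2)" by simp
    finally show ?thesis .
  qed
  have "W * norm gu powr (p-4) * (gu \<bullet> v)\<^sup>2 \<le> W * norm gu powr (p-4) * ((norm gu)\<^sup>2 * (norm v)\<^sup>2)"
    using cs assms by (intro mult_left_mono) auto
  also have "\<dots> = W * gpow (norm gu) (p-2) * (norm v)\<^sup>2"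
    using pw assms unfolding gpow_def by (simp add: algebra_simps)
  finally show ?thesis using False by simp
qed

lemma main_fixed:
  fixes w g u \<psi> ih jh kh fh lh :: "'a::euclidean_space \<Rightarrow> real" and p \<delta> \<gamma> \<alpha> \<beta> :: real
  assumes p: "p \<ge> 2"
    and wl: "locally_integrable w" and gl: "locally_integrable g"
    and wpos: "AE x in lborel. w x > 0" and gpos: "AE x in lborel. g x > 0"
    and d: "0 < \<delta>" and dg: "\<delta> \<le> \<gamma>"
    and u: "C1 u" and upos: "\<forall>x. u x > 0"
    and weak: "weak_solution p \<delta> \<gamma> w g u" and stab: "stable p \<delta> \<gamma> w g u"
    and a: "\<alpha> > 0"
    and psi: "C1c \<psi>" and psi0: "\<forall>x. \<psi> x \<ge> 0"
  assumes ih_def: "ih = (\<lambda>x. gpow (norm (grad u x)) (p-2) * u x powr (-2*\<alpha>-2) * \<psi> x powr p * (norm (grad u x))\<^sup>2)"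
    and jh_def: "jh = (\<lambda>x. gpow (norm (grad u x)) (p-2) * u x powr (-2*\<alpha>-1) * \<psi> x powr (p-1) * (grad u x \<bullet> grad \<psi> x))"
    and kh_def: "kh = (\<lambda>x. gpow (norm (grad u x)) (p-2) * u x powr (-2*\<alpha>) * \<psi> x powr (p-2) * (norm (grad \<psi> x))\<^sup>2)"
    and fh_def: "fh = (\<lambda>x. (u x powr (-\<delta>) + u x powr (-\<gamma>)) * u x powr (-2*\<alpha>-1) * \<psi> x powr p)"
    and lh_def: "lh = (\<lambda>x. u x powr (-2*\<beta>) * norm (grad \<psi> x) powr p)"
  shows "integrable lborel (\<lambda>x. w x * ih x)" "integrable lborel (\<lambda>x. w x * kh x)"
    "integrable lborel (\<lambda>x. g x * fh x)"
    "(\<integral>x. g x * fh x \<partial>lborel) = (2*\<alpha>+1) * (\<integral>x. w x * ih x \<partial>lborel) - p * (\<integral>x. w x * jh x \<partial>lborel)"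
    "\<delta> * (\<integral>x. g x * fh x \<partial>lborel) \<le> (p-1) * (\<alpha>\<^sup>2 * (\<integral>x. w x * ih x \<partial>lborel)
        - \<alpha>*p*(\<integral>x. w x * jh x \<partial>lborel) + (p\<^sup>2/4) * (\<integral>x. w x * kh x \<partial>lborel))"
    "\<And>e. e > 0 \<Longrightarrow> \<bar>\<integral>x. w x * jh x \<partial>lborel\<bar> \<le> e * (\<integral>x. w x * ih x \<partial>lborel) + (1/(4*e)) * (\<integral>x. w x * kh x \<partial>lborel)"
    "integrable lborel (\<lambda>x. w x * lh x)"
    "(\<integral>x. w x * ih x \<partial>lborel) \<ge> 0" "(\<integral>x. w x * kh x \<partial>lborel) \<ge> 0" "(\<integral>x. g x * fh x \<partial>lborel) \<ge> 0"
    "\<And>e C. (\<forall>x. kh x \<le> e * ih x + C * lh x) \<Longrightarrow>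
       (\<integral>x. w x * kh x \<partial>lborel) \<le> e * (\<integral>x. w x * ih x \<partial>lborel) + C * (\<integral>x. w x * lh x \<partial>lborel)"
proof -
  have psiC: "C1 \<psi>" and psib: "bounded {x. \<psi> x \<noteq> 0}" using psi unfolding C1c_def by auto
  define K where "K = closure {x. \<psi> x \<noteq> 0}"
  have K: "compact K" unfolding K_def using psib by (simp add: compact_closure)
  have outK: "x \<notin> K \<Longrightarrow> \<psi> x = 0" for x unfolding K_def using closure_subset[of "{x. \<psi> x \<noteq> 0}"] by auto
  have gpsi0: "\<psi> x = 0 \<Longrightarrow> grad \<psi> x = 0" for x by (rule grad_zero_min[OF psiC psi0])
  have cu: "continuous_on UNIV u" "continuous_on UNIV \<psi>" using C1_cont u psiC by auto
  have cgu: "continuous_on UNIV (grad u)" "continuous_on UNIV (grad \<psi>)" using u psiC unfolding C1_def by auto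
  have [measurable]: "u \<in> borel_measurable borel" "\<psi> \<in> borel_measurable borel"
    "grad u \<in> borel_measurable borel" "grad \<psi> \<in> borel_measurable borel"
    using cu cgu by (auto intro: borel_measurable_continuous_onI)
  have cK: "continuous_on K u" "continuous_on K \<psi>" "continuous_on K (grad u)" "continuous_on K (grad \<psi>)"
    using cu cgu continuous_on_subset by blast+
  have unz: "u x \<noteq> 0" for x using upos by (metis less_irrefl)
  have bu: "bdd_on K (\<lambda>x. u x powr e)" for e
    by (rule bdd_on_cont[OF K], rule continuous_on_powr') (use cK upos unz in \<open>auto simp: less_imp_le\<close>)
  have bps: "bdd_on K \<psi>" by (rule bdd_on_cont[OF K cK(2)])
  have bpsi: "r \<ge> 0 \<Longrightarrow> bdd_on K (\<lambda>x. \<psi> x powr r)" for r by (rule bdd_on_powr[OF bps psi0])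
  have bnu: "bdd_on K (\<lambda>x. norm (grad u x))" by (rule bdd_on_cont[OF K]) (intro continuous_intros cK)
  have bnp: "bdd_on K (\<lambda>x. norm (grad \<psi> x))" by (rule bdd_on_cont[OF K]) (intro continuous_intros cK)
  have bD: "bdd_on K (\<lambda>x. grad u x \<bullet> grad \<psi> x)" by (rule bdd_on_cont[OF K]) (intro continuous_intros cK)
  have bga: "bdd_on K (\<lambda>x. gpow (norm (grad u x)) (p-2))"
  proof (cases "p = 2")
    case True then show ?thesis unfolding gpow_def by (simp add: bdd_on_const)
  next
    case False then show ?thesis unfolding gpow_def using p by (simp add: bdd_on_powr[OF bnu])
  qed
  have bsq: "bdd_on K f \<Longrightarrow> bdd_on K (\<lambda>x. (f x)\<^sup>2)" for f :: "'a \<Rightarrow> real"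
    unfolding power2_eq_square by (rule bdd_on_mult)
  have mih: "ih \<in> borel_measurable lborel" unfolding ih_def gpow_def by measurable
  have mjh: "jh \<in> borel_measurable lborel" unfolding jh_def gpow_def by measurable
  have mkh: "kh \<in> borel_measurable lborel" unfolding kh_def gpow_def by measurable
  have mfh: "fh \<in> borel_measurable lborel" unfolding fh_def by measurable
  have bih: "bdd_on K ih" unfolding ih_def using p by (intro bdd_on_mult bsq bu bpsi bga bnu) auto
  have bjh: "bdd_on K jh" unfolding jh_def using p by (intro bdd_on_mult bu bpsi bga bD) auto
  have bkh: "bdd_on K kh" unfolding kh_def using p by (intro bdd_on_mult bsq bu bpsi bga bnp) auto
  have bfh: "bdd_on K fh" unfolding fh_def using p by (intro bdd_on_mult bdd_on_add bu bpsi) auto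
  have oih: "\<forall>x. x \<notin> K \<longrightarrow> ih x = 0" unfolding ih_def using outK by simp
  have ojh: "\<forall>x. x \<notin> K \<longrightarrow> jh x = 0" unfolding jh_def using outK by simp
  have okh: "\<forall>x. x \<notin> K \<longrightarrow> kh x = 0" unfolding kh_def using outK by simp
  have ofh: "\<forall>x. x \<notin> K \<longrightarrow> fh x = 0" unfolding fh_def using outK by simp
  show iI: "integrable lborel (\<lambda>x. w x * ih x)" by (rule li_integrable'[OF wl K mih oih bih])
  have iJ: "integrable lborel (\<lambda>x. w x * jh x)" by (rule li_integrable'[OF wl K mjh ojh bjh])
  show iK: "integrable lborel (\<lambda>x. w x * kh x)" by (rule li_integrable'[OF wl K mkh okh bkh])
  show iF: "integrable lborel (\<lambda>x. g x * fh x)" by (rule li_integrable'[OF gl K mfh ofh bfh])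
  have mlh: "lh \<in> borel_measurable lborel" unfolding lh_def by measurable
  have blh: "bdd_on K lh" unfolding lh_def using p by (intro bdd_on_mult bu bdd_on_powr[OF bnp]) auto
  have olh: "\<forall>x. x \<notin> K \<longrightarrow> lh x = 0" unfolding lh_def using outK gpsi0 p by simp
  show iL: "integrable lborel (\<lambda>x. w x * lh x)" by (rule li_integrable'[OF wl K mlh olh blh])
  have gaz: "gpow r (p-2) \<ge> 0" for r unfolding gpow_def by simp
  have ihn: "ih x \<ge> 0" for x unfolding ih_def using gaz by simp
  have khn: "kh x \<ge> 0" for x unfolding kh_def using gaz by simp
  have fhn: "fh x \<ge> 0" for x unfolding fh_def by simp
  show "(\<integral>x. w x * ih x \<partial>lborel) \<ge> 0"
    by (rule integral_nonneg_AE) (use wpos ihn in \<open>auto elim!: eventually_mono\<close>)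
  show "(\<integral>x. w x * kh x \<partial>lborel) \<ge> 0"
    by (rule integral_nonneg_AE) (use wpos khn in \<open>auto elim!: eventually_mono\<close>)
  show "(\<integral>x. g x * fh x \<partial>lborel) \<ge> 0"
    by (rule integral_nonneg_AE) (use gpos fhn in \<open>auto elim!: eventually_mono\<close>)
  show "(\<integral>x. w x * kh x \<partial>lborel) \<le> e * (\<integral>x. w x * ih x \<partial>lborel) + C * (\<integral>x. w x * lh x \<partial>lborel)"
    if y: "\<forall>x. kh x \<le> e * ih x + C * lh x" for e C
  proof -
    have "(\<integral>x. w x * kh x \<partial>lborel) \<le> (\<integral>x. e * (w x * ih x) + C * (w x * lh x) \<partial>lborel)"
    proof (rule integral_mono_AE)
      show "integrable lborel (\<lambda>x. e * (w x * ih x) + C * (w x * lh x))" using iI iL by simp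
      show "AE x in lborel. w x * kh x \<le> e * (w x * ih x) + C * (w x * lh x)"
        using wpos
      proof eventually_elim
        case (elim x)
        then have "w x * kh x \<le> w x * (e * ih x + C * lh x)" using y by (intro mult_left_mono) auto
        then show ?case by (simp add: algebra_simps)
      qed
    qed (use iK in simp)
    also have "\<dots> = e * (\<integral>x. w x * ih x \<partial>lborel) + C * (\<integral>x. w x * lh x \<partial>lborel)" using iI iL by simp
    finally show ?thesis .
  qed
  have suppb: "bounded {x. f x \<noteq> 0}" if "\<And>x. \<psi> x = 0 \<Longrightarrow> f x = 0" for f :: "'a \<Rightarrow> real"
    by (rule bounded_subset[OF psib]) (use that in auto)
  define \<phi>2 where "\<phi>2 = (\<lambda>x. u x powr (-2*\<alpha>-1) * \<psi> x powr p)"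
  have p1: "p \<ge> 1" using p by simp
  have C2: "C1 \<phi>2" unfolding \<phi>2_def by (rule C1_mult(1)[OF C1_upowr(1)[OF u upos] C1_spowr(1)[OF psiC psi0 p1]])
  have g2: "grad \<phi>2 x = u x powr (-2*\<alpha>-1) *\<^sub>R ((p * \<psi> x powr (p-1)) *\<^sub>R grad \<psi> x)
      + \<psi> x powr p *\<^sub>R (((-2*\<alpha>-1) * u x powr (-2*\<alpha>-1-1)) *\<^sub>R grad u x)" for x
    unfolding \<phi>2_def C1_mult(2)[OF C1_upowr(1)[OF u upos] C1_spowr(1)[OF psiC psi0 p1]]
      C1_upowr(2)[OF u upos] C1_spowr(2)[OF psiC psi0 p1] by simp
  have "bounded {x. \<phi>2 x \<noteq> 0}" by (rule suppb) (simp add: \<phi>2_def)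
  then have C2c: "C1c \<phi>2" unfolding C1c_def using C2 by simp
  have weq: "(\<integral>x. w x * gpow (norm (grad u x)) (p-2) * (grad u x \<bullet> grad \<phi>2 x) \<partial>lborel)
        = (\<integral>x. g x * fsing \<delta> \<gamma> (u x) * \<phi>2 x \<partial>lborel)"
    using weak C2c unfolding weak_solution_def by blast
  have l1: "(\<lambda>x. w x * gpow (norm (grad u x)) (p-2) * (grad u x \<bullet> grad \<phi>2 x))
     = (\<lambda>x. p * (w x * jh x) + (-2*\<alpha>-1) * (w x * ih x))"
    unfolding g2 phi2_inner ih_def jh_def by (auto simp: algebra_simps)
  have r1: "(\<lambda>x. g x * fsing \<delta> \<gamma> (u x) * \<phi>2 x) = (\<lambda>x. - (g x * fh x))"
    unfolding fh_def \<phi>2_def fsing_def by (auto simp: algebra_simps)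
  have "p * (\<integral>x. w x * jh x \<partial>lborel) + (-2*\<alpha>-1) * (\<integral>x. w x * ih x \<partial>lborel) = - (\<integral>x. g x * fh x \<partial>lborel)"
    using weq unfolding l1 r1 using iI iJ by simp
  then show "(\<integral>x. g x * fh x \<partial>lborel) = (2*\<alpha>+1) * (\<integral>x. w x * ih x \<partial>lborel) - p * (\<integral>x. w x * jh x \<partial>lborel)"
    by (simp add: algebra_simps)
  define \<phi> where "\<phi> = (\<lambda>x. u x powr (-\<alpha>) * \<psi> x powr (p/2))"
  have p12: "p/2 \<ge> 1" using p by simp
  have C1p: "C1 \<phi>" unfolding \<phi>_def by (rule C1_mult(1)[OF C1_upowr(1)[OF u upos] C1_spowr(1)[OF psiC psi0 p12]])
  have g1: "grad \<phi> x = u x powr (-\<alpha>) *\<^sub>R ((p/2 * \<psi> x powr (p/2-1)) *\<^sub>R grad \<psi> x)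
      + \<psi> x powr (p/2) *\<^sub>R ((-\<alpha> * u x powr (-\<alpha>-1)) *\<^sub>R grad u x)" for x
    unfolding \<phi>_def C1_mult(2)[OF C1_upowr(1)[OF u upos] C1_spowr(1)[OF psiC psi0 p12]]
      C1_upowr(2)[OF u upos] C1_spowr(2)[OF psiC psi0 p12] by simp
  have "bounded {x. \<phi> x \<noteq> 0}" by (rule suppb) (simp add: \<phi>_def)
  then have C1pc: "C1c \<phi>" unfolding C1c_def using C1p by simp
  define T1 where "T1 = (\<integral>x. w x * gpow (norm (grad u x)) (p-2) * (norm (grad \<phi> x))\<^sup>2 \<partial>lborel)"
  define T2 where "T2 = (\<integral>x. (if grad u x = 0 then 0 else
              w x * norm (grad u x) powr (p-4) * (grad u x \<bullet> grad \<phi> x)\<^sup>2) \<partial>lborel)"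
  define T3 where "T3 = (\<integral>x. g x * fsing' \<delta> \<gamma> (u x) * (\<phi> x)\<^sup>2 \<partial>lborel)"
  have st: "T1 + (p-2) * T2 - T3 \<ge> 0" using stab C1pc unfolding stable_def T1_def T2_def T3_def by blast
  have l2: "(\<lambda>x. w x * gpow (norm (grad u x)) (p-2) * (norm (grad \<phi> x))\<^sup>2)
     = (\<lambda>x. \<alpha>\<^sup>2 * (w x * ih x) - \<alpha>*p * (w x * jh x) + (p\<^sup>2/4) * (w x * kh x))"
    unfolding g1 phi_expand ih_def jh_def kh_def by (auto simp: algebra_simps)
  have iT1: "integrable lborel (\<lambda>x. w x * gpow (norm (grad u x)) (p-2) * (norm (grad \<phi> x))\<^sup>2)"
    unfolding l2 using iI iJ iK by simp
  have T1e: "T1 = \<alpha>\<^sup>2 * (\<integral>x. w x * ih x \<partial>lborel) - \<alpha>*p*(\<integral>x. w x * jh x \<partial>lborel) + (p\<^sup>2/4) * (\<integral>x. w x * kh x \<partial>lborel)"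
    unfolding T1_def l2 using iI iJ iK by simp
  have T1nn: "T1 \<ge> 0" unfolding T1_def
  proof (rule integral_nonneg_AE)
    show "AE x in lborel. 0 \<le> w x * gpow (norm (grad u x)) (p-2) * (norm (grad \<phi> x))\<^sup>2"
      using wpos by eventually_elim (simp add: gaz)
  qed
  have T2b: "(p-2) * T2 \<le> (p-2) * T1"
  proof (cases "p = 2")
    case False
    then have p2: "p > 2" using p by simp
    have "T2 \<le> T1"
    proof (cases "integrable lborel (\<lambda>x. (if grad u x = 0 then 0 else
              w x * norm (grad u x) powr (p-4) * (grad u x \<bullet> grad \<phi> x)\<^sup>2))")
      case True
      show ?thesis unfolding T1_def T2_def
      proof (rule integral_mono_AE[OF True iT1])
        show "AE x in lborel. (if grad u x = 0 then 0
              else w x * norm (grad u x) powr (p - 4) * (grad u x \<bullet> grad \<phi> x)\<^sup>2)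
              \<le> w x * gpow (norm (grad u x)) (p - 2) * (norm (grad \<phi> x))\<^sup>2"
          using wpos by eventually_elim (rule mid_bound[OF _ p2], simp)
      qed
    next
      case False then show ?thesis unfolding T2_def using T1nn T1_def by (simp add: not_integrable_integral_eq)
    qed
    then show ?thesis using p by (intro mult_left_mono) auto
  qed simp
  have gfh: "\<delta> * (g x * fh x) \<le> g x * fsing' \<delta> \<gamma> (u x) * (\<phi> x)\<^sup>2" if "g x > 0" for x
  proof -
    have "\<delta> * fh x \<le> fsing' \<delta> \<gamma> (u x) * (\<phi> x)\<^sup>2"
      unfolding fh_def fsing'_def \<phi>_def by (rule fprime_bound) (use upos dg psi0 d in auto)
    then have "g x * (\<delta> * fh x) \<le> g x * (fsing' \<delta> \<gamma> (u x) * (\<phi> x)\<^sup>2)" using that by (intro mult_left_mono) auto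
    then show ?thesis by (simp add: algebra_simps)
  qed
  have m3: "(\<lambda>x. fsing' \<delta> \<gamma> (u x) * (\<phi> x)\<^sup>2) \<in> borel_measurable lborel"
    unfolding fsing'_def \<phi>_def by measurable
  have b3: "bdd_on K (\<lambda>x. fsing' \<delta> \<gamma> (u x) * (\<phi> x)\<^sup>2)"
    unfolding fsing'_def \<phi>_def using p by (intro bdd_on_mult bdd_on_add bsq bu bpsi bdd_on_const) auto
  have o3: "\<forall>x. x \<notin> K \<longrightarrow> fsing' \<delta> \<gamma> (u x) * (\<phi> x)\<^sup>2 = 0" unfolding \<phi>_def using outK p by simp
  have iT3: "integrable lborel (\<lambda>x. g x * fsing' \<delta> \<gamma> (u x) * (\<phi> x)\<^sup>2)"
    using li_integrable'[OF gl K m3 o3 b3] by (simp add: mult.assoc)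
  have T3b: "\<delta> * (\<integral>x. g x * fh x \<partial>lborel) \<le> T3"
  proof -
    have "(\<integral>x. \<delta> * (g x * fh x) \<partial>lborel) \<le> T3" unfolding T3_def
      by (rule integral_mono_AE) (use iF iT3 gpos gfh in \<open>auto elim!: eventually_mono\<close>)
    then show ?thesis by simp
  qed
  have "T3 \<le> (p-1) * T1" using st T2b by (simp add: algebra_simps)
  then show "\<delta> * (\<integral>x. g x * fh x \<partial>lborel) \<le> (p-1) * (\<alpha>\<^sup>2 * (\<integral>x. w x * ih x \<partial>lborel)
        - \<alpha>*p*(\<integral>x. w x * jh x \<partial>lborel) + (p\<^sup>2/4) * (\<integral>x. w x * kh x \<partial>lborel))"
    using T3b T1e by simp
  show "\<bar>\<integral>x. w x * jh x \<partial>lborel\<bar> \<le> e * (\<integral>x. w x * ih x \<partial>lborel) + (1/(4*e)) * (\<integral>x. w x * kh x \<partial>lborel)"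
    if e: "e > 0" for e
  proof -
    have pt: "\<bar>w x * jh x\<bar> \<le> e * (w x * ih x) + (1/(4*e)) * (w x * kh x)" if wx: "w x > 0" for x
    proof -
      have jb: "\<bar>u x powr (-2*\<alpha>-1) * \<psi> x powr (p-1) * (grad u x \<bullet> grad \<psi> x)\<bar>
         \<le> e * (u x powr (-2*\<alpha>-2) * \<psi> x powr p * (norm (grad u x))\<^sup>2)
           + (1/(4*e)) * (u x powr (-2*\<alpha>) * \<psi> x powr (p-2) * (norm (grad \<psi> x))\<^sup>2)"
        by (rule J_bound) (use upos psi0 e Cauchy_Schwarz_ineq2 in auto)
      have wg: "w x * gpow (norm (grad u x)) (p-2) \<ge> 0" using wx gaz by simp
      have "\<bar>w x * jh x\<bar> = (w x * gpow (norm (grad u x)) (p-2)) * \<bar>u x powr (-2*\<alpha>-1) * \<psi> x powr (p-1) * (grad u x \<bullet> grad \<psi> x)\<bar>"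
      proof -
        have "\<bar>w x * jh x\<bar> = \<bar>w x * gpow (norm (grad u x)) (p-2)\<bar> * \<bar>u x powr (-2*\<alpha>-1) * \<psi> x powr (p-1) * (grad u x \<bullet> grad \<psi> x)\<bar>"
          unfolding jh_def by (simp only: abs_mult[symmetric] mult.assoc)
        then show ?thesis using wg by simp
      qed
      also have "\<dots> \<le> (w x * gpow (norm (grad u x)) (p-2)) * (e * (u x powr (-2*\<alpha>-2) * \<psi> x powr p * (norm (grad u x))\<^sup>2)
           + (1/(4*e)) * (u x powr (-2*\<alpha>) * \<psi> x powr (p-2) * (norm (grad \<psi> x))\<^sup>2))"
        by (rule mult_left_mono[OF jb wg])
      also have "\<dots> = e * (w x * ih x) + (1/(4*e)) * (w x * kh x)"
        unfolding ih_def kh_def by (simp add: algebra_simps)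
      finally show ?thesis .
    qed
    have "\<bar>\<integral>x. w x * jh x \<partial>lborel\<bar> \<le> (\<integral>x. \<bar>w x * jh x\<bar> \<partial>lborel)" by (rule integral_abs_bound)
    also have "\<dots> \<le> (\<integral>x. e * (w x * ih x) + (1/(4*e)) * (w x * kh x) \<partial>lborel)"
    proof (rule integral_mono_AE)
      show "integrable lborel (\<lambda>x. \<bar>w x * jh x\<bar>)" using iJ by simp
      show "integrable lborel (\<lambda>x. e * (w x * ih x) + (1/(4*e)) * (w x * kh x))" using iI iK by simp
      show "AE x in lborel. \<bar>w x * jh x\<bar> \<le> e * (w x * ih x) + (1/(4*e)) * (w x * kh x)"
        using wpos by eventually_elim (rule pt)
    qed
    also have "\<dots> = e * (\<integral>x. w x * ih x \<partial>lborel) + (1/(4*e)) * (\<integral>x. w x * kh x \<partial>lborel)"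
      using iI iK by simp
    finally show ?thesis .
  qed
qed

theorem mainTheorem2:
  fixes w g u :: "'a::euclidean_space \<Rightarrow> real" and p \<delta> \<gamma> :: real
  assumes "p \<ge> 2"
    and "locally_integrable w" and "locally_integrable g"
    and "AE x in lborel. w x > 0" and "AE x in lborel. g x > 0"
    and "0 < \<delta>" and "\<delta> \<le> \<gamma>" and "P_b \<delta> p"
    and "C1 u" and "\<forall>x. u x > 0"
    and "weak_solution p \<delta> \<gamma> w g u" and "stable p \<delta> \<gamma> w g u"
  shows "\<forall>\<beta>. 0 < \<beta> \<and> \<beta> < s_p \<delta> p \<longrightarrow>
           (\<exists>c>0. \<forall>\<psi>. C1c \<psi> \<and> (\<forall>x. \<psi> x \<ge> 0) \<longrightarrow>
              (\<integral>x. g x * (u x powr (-\<delta>) + u x powr (-\<gamma>)) * u x powr (-2*\<beta>-p+1)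
                     * \<psi> x powr p \<partial>lborel)
              \<le> c * (\<integral>x. w x * u x powr (-2*\<beta>) * norm (grad \<psi> x) powr p \<partial>lborel))"
proof (intro allI impI)
  fix \<beta> assume hb: "0 < \<beta> \<and> \<beta> < s_p \<delta> p"
  have p: "p \<ge> 2" and d: "0 < \<delta>" using assms by auto
  have bs: "\<beta> < (if p = 2 then \<delta> + sqrt (\<delta>\<^sup>2 + \<delta>) else 2*\<delta>/(p-1) - (p-1)/2)"
    using hb unfolding s_p_def by simp
  note Qh = Q_holds[OF p d conjunct1[OF hb] bs]
  obtain e1 M where e1: "e1 > 0" and M: "M > 0" and core: "\<forall>I J K F. I \<ge> 0 \<longrightarrow> K \<ge> 0 \<longrightarrow> F \<ge> 0 \<longrightarrow>
     F = (2*(\<beta> + (p-2)/2)+1)*I - p*J \<longrightarrow>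
     \<delta>*F \<le> (p-1)*((\<beta> + (p-2)/2)\<^sup>2*I - (\<beta> + (p-2)/2)*p*J + (p\<^sup>2/4)*K) \<longrightarrow>
     -(p*J) \<le> p*(e1*I + (1/(4*e1))*K) \<longrightarrow> F \<le> M*K \<and> I \<le> M*K"
    using alg_core[OF p Qh(1) d Qh(2)] by blast
  have eM: "1/(2*M) > 0" using M by simp
  obtain C2 where C2: "C2 > 0" and Y: "\<forall>a U s G. a \<ge> 0 \<longrightarrow> U > 0 \<longrightarrow> s \<ge> 0 \<longrightarrow> G \<ge> 0 \<longrightarrow>
    gpow a (p-2) * U powr (-2*(\<beta> + (p-2)/2)) * s powr (p-2) * G\<^sup>2
    \<le> 1/(2*M) * (gpow a (p-2) * U powr (-2*(\<beta> + (p-2)/2)-2) * s powr p * a\<^sup>2) + C2 * (U powr (-2*\<beta>) * G powr p)"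
    using young_pt[OF p eM, of \<beta>] by blast
  show "\<exists>c>0. \<forall>\<psi>. C1c \<psi> \<and> (\<forall>x. \<psi> x \<ge> 0) \<longrightarrow>
              (\<integral>x. g x * (u x powr (-\<delta>) + u x powr (-\<gamma>)) * u x powr (-2*\<beta>-p+1)
                     * \<psi> x powr p \<partial>lborel)
              \<le> c * (\<integral>x. w x * u x powr (-2*\<beta>) * norm (grad \<psi> x) powr p \<partial>lborel)"
  proof (intro exI[of _ "2*M*C2"] conjI allI impI)
    show "2*M*C2 > 0" using M C2 by simp
    fix \<psi> :: "'a \<Rightarrow> real" assume hpsi: "C1c \<psi> \<and> (\<forall>x. \<psi> x \<ge> 0)"
    define \<alpha> where "\<alpha> = \<beta> + (p-2)/2"
    define ih where "ih = (\<lambda>x. gpow (norm (grad u x)) (p-2) * u x powr (-2*\<alpha>-2) * \<psi> x powr p * (norm (grad u x))\<^sup>2)"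
    define jh where "jh = (\<lambda>x. gpow (norm (grad u x)) (p-2) * u x powr (-2*\<alpha>-1) * \<psi> x powr (p-1) * (grad u x \<bullet> grad \<psi> x))"
    define kh where "kh = (\<lambda>x. gpow (norm (grad u x)) (p-2) * u x powr (-2*\<alpha>) * \<psi> x powr (p-2) * (norm (grad \<psi> x))\<^sup>2)"
    define fh where "fh = (\<lambda>x. (u x powr (-\<delta>) + u x powr (-\<gamma>)) * u x powr (-2*\<alpha>-1) * \<psi> x powr p)"
    define lh where "lh = (\<lambda>x. u x powr (-2*\<beta>) * norm (grad \<psi> x) powr p)"
    have a: "\<alpha> > 0" using Qh(1) unfolding \<alpha>_def .
    note mf = main_fixed[OF assms(1-7) assms(9-12) a conjunct1[OF hpsi] conjunct2[OF hpsi] ih_def jh_def kh_def fh_def lh_def]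
    define I where "I = (\<integral>x. w x * ih x \<partial>lborel)"
    define J where "J = (\<integral>x. w x * jh x \<partial>lborel)"
    define K where "K = (\<integral>x. w x * kh x \<partial>lborel)"
    define F where "F = (\<integral>x. g x * fh x \<partial>lborel)"
    define L where "L = (\<integral>x. w x * lh x \<partial>lborel)"
    have I0: "I \<ge> 0" and K0: "K \<ge> 0" and F0: "F \<ge> 0" using mf(8-10) unfolding I_def K_def F_def by auto
    have W: "F = (2*\<alpha>+1)*I - p*J" using mf(4) unfolding I_def J_def F_def .
    have S: "\<delta>*F \<le> (p-1)*(\<alpha>\<^sup>2*I - \<alpha>*p*J + (p\<^sup>2/4)*K)" using mf(5) unfolding I_def J_def F_def K_def .
    have "\<bar>J\<bar> \<le> e1 * I + (1/(4*e1)) * K" using mf(6)[OF e1] unfolding I_def J_def K_def .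
    then have "-J \<le> e1*I + (1/(4*e1))*K" by linarith
    then have Jb: "-(p*J) \<le> p*(e1*I + (1/(4*e1))*K)" using p mult_left_mono[of "-J" _ p] by simp
    have FI: "F \<le> M*K \<and> I \<le> M*K" using core I0 K0 F0 W S Jb unfolding \<alpha>_def by blast
    have kpt: "\<forall>x. kh x \<le> 1/(2*M) * ih x + C2 * lh x"
    proof
      fix x
      show "kh x \<le> 1/(2*M) * ih x + C2 * lh x"
        unfolding kh_def ih_def lh_def \<alpha>_def
        using Y assms(10) conjunct2[OF hpsi] by simp
    qed
    have KL: "K \<le> 1/(2*M) * I + C2 * L" using mf(11)[OF kpt] unfolding K_def I_def L_def .
    have "1/(2*M) * I \<le> 1/(2*M) * (M*K)" using FI eM by (intro mult_left_mono) auto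
    also have "\<dots> = K/2" using M by simp
    finally have "K \<le> K/2 + C2 * L" using KL by linarith
    then have K2: "K \<le> 2*C2*L" by linarith
    have "F \<le> M*(2*C2*L)" using FI K2 M by (smt (verit) mult_left_mono)
    then have FL: "F \<le> 2*M*C2*L" by (simp add: algebra_simps)
    have e1': "-2*\<beta>-p+1 = -2*\<alpha>-1" unfolding \<alpha>_def by (simp add: field_simps)
    have lhs: "(\<lambda>x. g x * (u x powr (-\<delta>) + u x powr (-\<gamma>)) * u x powr (-2*\<beta>-p+1) * \<psi> x powr p) = (\<lambda>x. g x * fh x)"
      unfolding fh_def e1' by (simp add: algebra_simps)
    have rhs: "(\<lambda>x. w x * u x powr (-2*\<beta>) * norm (grad \<psi> x) powr p) = (\<lambda>x. w x * lh x)"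
      unfolding lh_def by (simp add: algebra_simps)
    show "(\<integral>x. g x * (u x powr (-\<delta>) + u x powr (-\<gamma>)) * u x powr (-2*\<beta>-p+1) * \<psi> x powr p \<partial>lborel)
              \<le> 2*M*C2 * (\<integral>x. w x * u x powr (-2*\<beta>) * norm (grad \<psi> x) powr p \<partial>lborel)"
      unfolding lhs rhs using FL unfolding F_def L_def .
  qed
qed

end
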